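(* Fix $t\ge1$. Let $\widehat g_{t-1}$, $b_t$, $r_t$ be random vectors in $\mathbb{R}^d$, $B_t$ a random $d\times d$ matrix, $\eta_{t-1}>0$ and $\lambda_t>0$, with finite second moments as needed. Define $u_{t-1}=\widehat g_{t-1}/\|\widehat g_{t-1}\|_2$ if $\widehat g_{t-1}\ne0$ and $u_{t-1}=0$ otherwise, and $P^\perp_{t-1}=I-u_{t-1}u_{t-1}^\top$. Assume \[ b_t=\eta_{t-1}B_t\widehat g_{t-1}+r_t \] and \[ \widehat g_{t-1}^\top B_t\widehat g_{t-1}\ge\lambda_t\|\widehat g_{t-1}\|_2^2\quad\text{almost surely}. \] Let $b_t^\perp=P^\perp_{t-1}b_t$. Then \[ \mathbb{E}\|b_t^\perp\|_2^2\le\mathbb{E}\|b_t\|_2^2-\eta_{t-1}^2\lambda_t^2\,\mathbb{E}\|\widehat g_{t-1}\|_2^2+2\eta_{t-1}\lambda_t\,\mathbb{E}\big[\|\widehat g_{t-1}\|_2\|r_t\|_2\big]. \] In particular, if $\mathbb{E}\|r_t\|_2^2\le\epsilon_t^2$ for some $\epsilon_t\ge0$, then \[ \mathbb{E}\|b_t^\perp\|_2^2\le\mathbb{E}\|b_t\|_2^2-\eta_{t-1}^2\lambda_t^2\,\mathbb{E}\|\widehat g_{t-1}\|_2^2+2\eta_{t-1}\lambda_t\,\epsilon_t\sqrt{\mathbb{E}\|\widehat g_{t-1}\|_2^2}. \]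
   Context: Interpretation: $\widehat g_{t-1}$ is the previous stochastic gradient in an asynchronous stochastic gradient iteration, $b_t$ is the staleness-induced bias of the current gradient (linearized with operator $B_t$, stepsize $\eta_{t-1}$, and remainder $r_t$), and $b_t^\perp$ is the bias after projecting out the previous-gradient direction. *)

theory Defs
  imports "HOL-Probability.Probability"
begin

definition unit_dir :: "real^'d \<Rightarrow> real^'d" where
  "unit_dir g = (if g = 0 then 0 else (1 / norm g) *\<^sub>R g)"

definition outer :: "real^'d \<Rightarrow> real^'d \<Rightarrow> real^'d^'d" where
  "outer u v = (\<chi> i j. u $ i * v $ j)"

definition perp_proj :: "real^'d \<Rightarrow> real^'d^'d" where
  "perp_proj g = mat 1 - outer (unit_dir g) (unit_dir g)"

end

theory Submission
  imports Defs
begin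
lemma outer_mult: "outer u u *v b = (u \<bullet> b) *\<^sub>R u"
  by (simp add: vec_eq_iff outer_def matrix_vector_mult_def inner_vec_def sum_distrib_left algebra_simps)

lemma perp_eq: "perp_proj g *v b = b - (unit_dir g \<bullet> b) *\<^sub>R unit_dir g"
  by (simp add: perp_proj_def matrix_vector_mult_diff_rdistrib outer_mult)

lemma pw:
  fixes g b r :: "real^'d" and B :: "real^'d^'d" and eta lam :: real
  assumes "b = eta *\<^sub>R (B *v g) + r" "g \<bullet> (B *v g) \<ge> lam * (norm g)\<^sup>2" "eta > 0" "lam > 0"
  shows "(norm (perp_proj g *v b))\<^sup>2 \<le> (norm b)\<^sup>2 - eta\<^sup>2 * lam\<^sup>2 * (norm g)\<^sup>2 + 2 * eta * lam * (norm g * norm r)"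
proof (cases "g = 0")
  case True
  then show ?thesis by (simp add: perp_eq unit_dir_def)
next
  case False
  define u where "u = unit_dir g"
  define c where "c = u \<bullet> b"
  have nu: "norm u = 1" using False by (simp add: u_def unit_dir_def)
  have uu: "u \<bullet> u = 1" using nu by (simp add: norm_eq_sqrt_inner)
  have "(norm (perp_proj g *v b))\<^sup>2 = (norm (b - c *\<^sub>R u))\<^sup>2" by (simp add: perp_eq u_def c_def)
  also have "\<dots> = (norm b)\<^sup>2 - c\<^sup>2"
    unfolding power2_norm_eq_inner by (simp add: inner_diff_left inner_diff_right uu c_def inner_commute power2_eq_square algebra_simps)
  finally have e1: "(norm (perp_proj g *v b))\<^sup>2 = (norm b)\<^sup>2 - c\<^sup>2" .
  have ng: "norm g > 0" using False by simp
  have gb: "g \<bullet> b = eta * (g \<bullet> (B *v g)) + g \<bullet> r" using assms(1) by (simp add: inner_add_right)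
  have "g \<bullet> r \<ge> - (norm g * norm r)" using Cauchy_Schwarz_ineq2[of g r] by linarith
  hence gb2: "g \<bullet> b \<ge> eta * lam * (norm g)\<^sup>2 - norm g * norm r"
  proof -
    have "eta * (lam * (norm g)\<^sup>2) \<le> eta * (g \<bullet> (B *v g))" using mult_left_mono[OF assms(2), of eta] assms(3) by simp
    thus ?thesis using gb \<open>g \<bullet> r \<ge> - (norm g * norm r)\<close> by (simp add: mult.assoc)
  qed
  have "c = (g \<bullet> b) / norm g" using False by (simp add: c_def u_def unit_dir_def)
  hence "c * norm g = g \<bullet> b" using ng by simp
  hence "c * norm g \<ge> (eta * lam * norm g - norm r) * norm g" using gb2 by (simp add: power2_eq_square algebra_simps)
  hence cge: "c \<ge> eta * lam * norm g - norm r" using ng by simp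
  define a where "a = eta * lam * norm g"
  have a0: "a \<ge> 0" using assms by (simp add: a_def)
  have "c\<^sup>2 \<ge> a\<^sup>2 - 2 * a * norm r"
  proof (cases "a - norm r \<ge> 0")
    case True
    hence "(a - norm r)\<^sup>2 \<le> c\<^sup>2" using cge a_def by (simp add: power_mono)
    moreover have "(a - norm r)\<^sup>2 = a\<^sup>2 - 2 * a * norm r + (norm r)\<^sup>2" by (simp add: power2_diff)
    moreover have "(norm r)\<^sup>2 \<ge> 0" by simp
    ultimately show ?thesis by linarith
  next
    case False
    hence "a * a \<le> a * norm r" using a0 by (intro mult_left_mono) auto
    moreover have "a * norm r \<ge> 0" using a0 by simp
    ultimately have "a\<^sup>2 - 2 * a * norm r \<le> 0" by (simp add: power2_eq_square)
    moreover have "c\<^sup>2 \<ge> 0" by simp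
    ultimately show ?thesis by linarith
  qed
  thus ?thesis using e1 by (simp add: a_def power_mult_distrib algebra_simps)
qed

lemma cs_bound:
  fixes M :: "'s measure" and g r :: "'s \<Rightarrow> real^'d"
  assumes "g \<in> borel_measurable M" "r \<in> borel_measurable M"
    and ig: "integrable M (\<lambda>x. (norm (g x))\<^sup>2)"
    and ir: "integrable M (\<lambda>x. (norm (r x))\<^sup>2)"
    and ip: "integrable M (\<lambda>x. norm (g x) * norm (r x))"
    and eps: "eps \<ge> 0" "(\<integral>x. (norm (r x))\<^sup>2 \<partial>M) \<le> eps\<^sup>2"
  shows "(\<integral>x. norm (g x) * norm (r x) \<partial>M) \<le> eps * sqrt (\<integral>x. (norm (g x))\<^sup>2 \<partial>M)"
proof -
  define G where "G = (\<integral>x. (norm (g x))\<^sup>2 \<partial>M)"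
  define R where "R = (\<integral>x. (norm (r x))\<^sup>2 \<partial>M)"
  have G0: "G \<ge> 0" unfolding G_def by (rule integral_nonneg_AE) simp
  have R0: "R \<ge> 0" unfolding R_def by (rule integral_nonneg_AE) simp
  show ?thesis
  proof (cases "G = 0 \<or> eps = 0")
    case True
    have "AE x in M. norm (g x) * norm (r x) = 0"
    proof (cases "G = 0")
      case True
      hence "AE x in M. (norm (g x))\<^sup>2 = 0"
        using integral_nonneg_eq_0_iff_AE[OF ig] G_def by simp
      thus ?thesis by eventually_elim simp
    next
      case False
      hence "R = 0" using \<open>G = 0 \<or> eps = 0\<close> eps R0 R_def by force
      hence "AE x in M. (norm (r x))\<^sup>2 = 0"
        using integral_nonneg_eq_0_iff_AE[OF ir] R_def by simp
      thus ?thesis by eventually_elim simp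
    qed
    hence "(\<integral>x. norm (g x) * norm (r x) \<partial>M) = 0" by (rule integral_eq_zero_AE)
    thus ?thesis using eps G0 G_def by simp
  next
    case False
    hence Gp: "G > 0" and ep: "eps > 0" using G0 eps by auto
    define t where "t = eps / sqrt G"
    have tp: "t > 0" using Gp ep by (simp add: t_def)
    have pw: "norm (g x) * norm (r x) \<le> (t * (norm (g x))\<^sup>2 + (norm (r x))\<^sup>2 / t) / 2" for x
    proof -
      have "0 \<le> (t * norm (g x) - norm (r x))\<^sup>2" by simp
      hence "2 * t * (norm (g x) * norm (r x)) \<le> t\<^sup>2 * (norm (g x))\<^sup>2 + (norm (r x))\<^sup>2"
        by (simp add: power2_diff power_mult_distrib algebra_simps)
      hence "2 * t * (norm (g x) * norm (r x)) / t \<le> (t\<^sup>2 * (norm (g x))\<^sup>2 + (norm (r x))\<^sup>2) / t"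
        using tp by (intro divide_right_mono) auto
      thus ?thesis using tp by (simp add: field_simps power2_eq_square)
    qed
    have "(\<integral>x. norm (g x) * norm (r x) \<partial>M) \<le> (\<integral>x. (t * (norm (g x))\<^sup>2 + (norm (r x))\<^sup>2 / t) / 2 \<partial>M)"
      using ip ig ir pw by (intro integral_mono) auto
    also have "\<dots> = (t * G + R / t) / 2"
      using ig ir by (simp add: G_def R_def)
    also have "t * G = eps * sqrt G" using Gp by (simp add: t_def field_simps real_sqrt_mult[symmetric])
    also have "(eps * sqrt G + R / t) / 2 \<le> (eps * sqrt G + eps\<^sup>2 / t) / 2"
      using eps(2) R_def tp by (simp add: divide_right_mono)
    also have "eps\<^sup>2 / t = eps * sqrt G" using ep Gp by (simp add: t_def power2_eq_square)
    finally show ?thesis by (simp add: G_def)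
  qed
qed

theorem propositionF1:
  fixes M :: "'s measure"
    and g b r :: "'s \<Rightarrow> real^'d"
    and B :: "'s \<Rightarrow> real^'d^'d"
    and eta lam :: real
  assumes "prob_space M"
    and "g \<in> borel_measurable M" and "b \<in> borel_measurable M"
    and "r \<in> borel_measurable M" and "B \<in> borel_measurable M"
    and "integrable M (\<lambda>x. (norm (g x))\<^sup>2)"
    and "integrable M (\<lambda>x. (norm (b x))\<^sup>2)"
    and "integrable M (\<lambda>x. (norm (r x))\<^sup>2)"
    and "eta > 0" and "lam > 0"
    and "AE x in M. b x = eta *\<^sub>R (B x *v g x) + r x"
    and "AE x in M. g x \<bullet> (B x *v g x) \<ge> lam * (norm (g x))\<^sup>2"
  shows "((\<integral>x. (norm (perp_proj (g x) *v b x))\<^sup>2 \<partial>M)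
           \<le> (\<integral>x. (norm (b x))\<^sup>2 \<partial>M) - eta\<^sup>2 * lam\<^sup>2 * (\<integral>x. (norm (g x))\<^sup>2 \<partial>M)
             + 2 * eta * lam * (\<integral>x. norm (g x) * norm (r x) \<partial>M))
    \<and> (\<forall>eps::real. eps \<ge> 0 \<longrightarrow> (\<integral>x. (norm (r x))\<^sup>2 \<partial>M) \<le> eps\<^sup>2 \<longrightarrow>
           (\<integral>x. (norm (perp_proj (g x) *v b x))\<^sup>2 \<partial>M)
           \<le> (\<integral>x. (norm (b x))\<^sup>2 \<partial>M) - eta\<^sup>2 * lam\<^sup>2 * (\<integral>x. (norm (g x))\<^sup>2 \<partial>M)
             + 2 * eta * lam * eps * sqrt (\<integral>x. (norm (g x))\<^sup>2 \<partial>M))"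
proof -
  note gm = assms(2) and rm = assms(4) and ig = assms(6) and ib = assms(7) and ir = assms(8)
  have ip: "integrable M (\<lambda>x. norm (g x) * norm (r x))"
  proof (rule Bochner_Integration.integrable_bound[OF Bochner_Integration.integrable_add[OF ig ir]])
    show "(\<lambda>x. norm (g x) * norm (r x)) \<in> borel_measurable M" using gm rm by measurable
    show "AE x in M. norm (norm (g x) * norm (r x)) \<le> norm ((norm (g x))\<^sup>2 + (norm (r x))\<^sup>2)"
    proof (rule AE_I2)
      fix x
      have "0 \<le> (norm (g x) - norm (r x))\<^sup>2" by simp
      hence "2 * (norm (g x) * norm (r x)) \<le> (norm (g x))\<^sup>2 + (norm (r x))\<^sup>2"
        by (simp add: power2_diff algebra_simps)
      moreover have "0 \<le> norm (g x) * norm (r x)" by simp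
      ultimately show "norm (norm (g x) * norm (r x)) \<le> norm ((norm (g x))\<^sup>2 + (norm (r x))\<^sup>2)"
        by (simp; linarith)
    qed
  qed
  define f where "f x = (norm (b x))\<^sup>2 - eta\<^sup>2 * lam\<^sup>2 * (norm (g x))\<^sup>2 + 2 * eta * lam * (norm (g x) * norm (r x))" for x
  have If: "integrable M f" unfolding f_def using ig ib ip by auto
  have intf: "(\<integral>x. f x \<partial>M) = (\<integral>x. (norm (b x))\<^sup>2 \<partial>M) - eta\<^sup>2 * lam\<^sup>2 * (\<integral>x. (norm (g x))\<^sup>2 \<partial>M)
             + 2 * eta * lam * (\<integral>x. norm (g x) * norm (r x) \<partial>M)"
    unfolding f_def using ig ib ip by simp
  have AEf: "AE x in M. (norm (perp_proj (g x) *v b x))\<^sup>2 \<le> f x"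
    using assms(11,12)
  proof eventually_elim
    case (elim x)
    show ?case unfolding f_def by (rule pw[OF elim(1) elim(2) assms(9) assms(10)])
  qed
  have AEf0: "AE x in M. 0 \<le> f x"
    using AEf by eventually_elim (auto intro: order_trans[rotated])
  have part1: "(\<integral>x. (norm (perp_proj (g x) *v b x))\<^sup>2 \<partial>M) \<le> (\<integral>x. f x \<partial>M)"
    by (rule integral_mono_AE'[OF If AEf AEf0])
  show ?thesis
  proof (intro conjI allI impI)
    show "(\<integral>x. (norm (perp_proj (g x) *v b x))\<^sup>2 \<partial>M)
           \<le> (\<integral>x. (norm (b x))\<^sup>2 \<partial>M) - eta\<^sup>2 * lam\<^sup>2 * (\<integral>x. (norm (g x))\<^sup>2 \<partial>M)
             + 2 * eta * lam * (\<integral>x. norm (g x) * norm (r x) \<partial>M)" using part1 intf by simp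
    fix eps :: real
    assume e1: "eps \<ge> 0" and e2: "(\<integral>x. (norm (r x))\<^sup>2 \<partial>M) \<le> eps\<^sup>2"
    have "(\<integral>x. norm (g x) * norm (r x) \<partial>M) \<le> eps * sqrt (\<integral>x. (norm (g x))\<^sup>2 \<partial>M)"
      by (rule cs_bound[OF gm rm ig ir ip e1 e2])
    hence "2 * eta * lam * (\<integral>x. norm (g x) * norm (r x) \<partial>M) \<le> 2 * eta * lam * (eps * sqrt (\<integral>x. (norm (g x))\<^sup>2 \<partial>M))"
      using assms(9,10) by (intro mult_left_mono) auto
    thus "(\<integral>x. (norm (perp_proj (g x) *v b x))\<^sup>2 \<partial>M)
           \<le> (\<integral>x. (norm (b x))\<^sup>2 \<partial>M) - eta\<^sup>2 * lam\<^sup>2 * (\<integral>x. (norm (g x))\<^sup>2 \<partial>M)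
             + 2 * eta * lam * eps * sqrt (\<integral>x. (norm (g x))\<^sup>2 \<partial>M)" using part1 intf by (simp add: mult.assoc)
  qed
qed

end
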